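(* Let $G=(V,E)$ be a connected almost bipartite permutation graph that contains a hole, let $C$ be a shortest hole, $m=|C|$, $c_0,\dots,c_{m-1}$ its vertices in cyclic order (indices modulo $m$), and for each $i$ let $A_i=\{v\in V: N(v)\cap C=\{c_{i-1},c_{i+1}\}\}$ and $B_i=\{v\in V: N(v)\cap C=\{c_i\}\}$ (indices modulo $m$). Let $i\in\{0,\dots,m-1\}$ and let $(p,q)\in\{(i-2,i-1),(i+2,i+1)\}$. Then: (1) For every $w,w'\in B_p\cup A_q$ the sets $N(w)\cap A_i$ and $N(w')\cap A_i$ are comparable with respect to inclusion; moreover, if $w\in B_p$ and $w'\in A_q$, then $N(w)\cap A_i\subseteq N(w')\cap A_i$. (2) For every $u,u'\in A_p\cup B_q$ the sets $N(u)\cap B_i$ and $N(u')\cap B_i$ are comparable with respect to inclusion; moreover, if $u\in A_p$ and $u'\in B_q$, then $N(u)\cap B_i\subseteq N(u')\cap B_i$.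
   Context: All graphs are finite, simple, undirected; $N(v)$ is the open neighborhood of $v$. A hole is an induced cycle on at least five vertices. $K_3$ is the triangle, $C_k$ the cycle on $k$ vertices. $T_2$ is the tree on 7 vertices obtained from the claw $K_{1,3}$ by subdividing each edge once. $X_2$ is the 7-vertex graph obtained from a 4-cycle by attaching one new pendant vertex to each of three of its four vertices. $X_3$ is the 7-vertex graph obtained from the domino (two 4-cycles sharing exactly one edge) by attaching one new pendant vertex to one endpoint of the shared edge. A graph is an almost bipartite permutation graph if it contains none of $T_2, X_2, X_3, K_3, C_5,\dots,C_9$ as an induced subgraph. *)

theory Defs
  imports Main
begin

definition simple_graph :: "'a set \<Rightarrow> ('a \<Rightarrow> 'a \<Rightarrow> bool) \<Rightarrow> bool" where
  "simple_graph V E \<longleftrightarrow> finite V \<and> (\<forall>x y. E x y \<longrightarrow> E y x)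
     \<and> (\<forall>x. \<not> E x x) \<and> (\<forall>x y. E x y \<longrightarrow> x \<in> V \<and> y \<in> V)"

definition connected_graph :: "'a set \<Rightarrow> ('a \<Rightarrow> 'a \<Rightarrow> bool) \<Rightarrow> bool" where
  "connected_graph V E \<longleftrightarrow> (\<forall>x\<in>V. \<forall>y\<in>V. E\<^sup>*\<^sup>* x y)"

definition nbhd :: "('a \<Rightarrow> 'a \<Rightarrow> bool) \<Rightarrow> 'a \<Rightarrow> 'a set" where
  "nbhd E v = {u. E v u}"

definition contains_induced ::
  "'a set \<Rightarrow> ('a \<Rightarrow> 'a \<Rightarrow> bool) \<Rightarrow> nat \<Rightarrow> (nat \<Rightarrow> nat \<Rightarrow> bool) \<Rightarrow> bool" where
  "contains_induced V E k H \<longleftrightarrow> (\<exists>f. inj_on f {0..<k} \<and> f ` {0..<k} \<subseteq> V \<and>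
      (\<forall>i<k. \<forall>j<k. E (f i) (f j) \<longleftrightarrow> H i j))"

definition graph_of_edges :: "(nat \<times> nat) list \<Rightarrow> nat \<Rightarrow> nat \<Rightarrow> bool" where
  "graph_of_edges es i j \<longleftrightarrow> (i, j) \<in> set es \<or> (j, i) \<in> set es"

definition cycle_graph :: "nat \<Rightarrow> nat \<Rightarrow> nat \<Rightarrow> bool" where
  "cycle_graph k i j \<longleftrightarrow> i < k \<and> j < k \<and> (j = (i + 1) mod k \<or> i = (j + 1) mod k)"

definition K3 :: "nat \<Rightarrow> nat \<Rightarrow> bool" where
  "K3 = graph_of_edges [(0,1),(1,2),(0,2)]"

text \<open>T2: claw with centre 0, each edge subdivided once.\<close>
definition T2 :: "nat \<Rightarrow> nat \<Rightarrow> bool" where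
  "T2 = graph_of_edges [(0,1),(1,2),(0,3),(3,4),(0,5),(5,6)]"

text \<open>X2: 4-cycle 0-1-2-3 with pendants 4,5,6 at 0,1,2.\<close>
definition X2 :: "nat \<Rightarrow> nat \<Rightarrow> bool" where
  "X2 = graph_of_edges [(0,1),(1,2),(2,3),(3,0),(4,0),(5,1),(6,2)]"

text \<open>X3: domino (4-cycles 0-1-2-3 and 1-2-4-5 sharing edge 1-2) with a
  pendant 6 at the endpoint 1 of the shared edge.\<close>
definition X3 :: "nat \<Rightarrow> nat \<Rightarrow> bool" where
  "X3 = graph_of_edges [(0,1),(1,2),(2,3),(3,0),(2,4),(4,5),(5,1),(6,1)]"

definition almost_bipartite_permutation :: "'a set \<Rightarrow> ('a \<Rightarrow> 'a \<Rightarrow> bool) \<Rightarrow> bool" where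
  "almost_bipartite_permutation V E \<longleftrightarrow>
     \<not> contains_induced V E 7 T2 \<and> \<not> contains_induced V E 7 X2 \<and>
     \<not> contains_induced V E 7 X3 \<and> \<not> contains_induced V E 3 K3 \<and>
     (\<forall>k\<in>{5..9}. \<not> contains_induced V E k (cycle_graph k))"

definition is_hole :: "'a set \<Rightarrow> ('a \<Rightarrow> 'a \<Rightarrow> bool) \<Rightarrow> (nat \<Rightarrow> 'a) \<Rightarrow> nat \<Rightarrow> bool" where
  "is_hole V E c m \<longleftrightarrow> m \<ge> 5 \<and> inj_on c {0..<m} \<and> c ` {0..<m} \<subseteq> V \<and>
     (\<forall>i<m. \<forall>j<m. E (c i) (c j) \<longleftrightarrow> cycle_graph m i j)"

definition cyc :: "(nat \<Rightarrow> 'a) \<Rightarrow> nat \<Rightarrow> int \<Rightarrow> 'a" where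
  "cyc c m i = c (nat (i mod int m))"

definition Aset :: "'a set \<Rightarrow> ('a \<Rightarrow> 'a \<Rightarrow> bool) \<Rightarrow> (nat \<Rightarrow> 'a) \<Rightarrow> nat \<Rightarrow> int \<Rightarrow> 'a set" where
  "Aset V E c m i = {v \<in> V. nbhd E v \<inter> c ` {0..<m} = {cyc c m (i - 1), cyc c m (i + 1)}}"

definition Bset :: "'a set \<Rightarrow> ('a \<Rightarrow> 'a \<Rightarrow> bool) \<Rightarrow> (nat \<Rightarrow> 'a) \<Rightarrow> nat \<Rightarrow> int \<Rightarrow> 'a set" where
  "Bset V E c m i = {v \<in> V. nbhd E v \<inter> c ` {0..<m} = {cyc c m i}}"

end

theory Submission
  imports Defs
begin

lemma all3: "(\<forall>i<(3::nat). P i) \<longleftrightarrow> P 0 \<and> P 1 \<and> P 2"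
  by (auto simp: less_Suc_eq numeral_eq_Suc)
lemma all6: "(\<forall>i<(6::nat). P i) \<longleftrightarrow> P 0 \<and> P 1 \<and> P 2 \<and> P 3 \<and> P 4 \<and> P 5"
proof -
  have "(6::nat) = Suc (Suc (Suc (Suc (Suc (Suc 0)))))" by simp
  then show ?thesis by (simp only: All_less_Suc) (auto simp: numeral_eq_Suc)
qed
lemma all7: "(\<forall>i<(7::nat). P i) \<longleftrightarrow> P 0 \<and> P 1 \<and> P 2 \<and> P 3 \<and> P 4 \<and> P 5 \<and> P 6"
proof -
  have "(7::nat) = Suc (Suc (Suc (Suc (Suc (Suc (Suc 0))))))" by simp
  then show ?thesis by (simp only: All_less_Suc) (auto simp: numeral_eq_Suc)
qed
lemma ci_list:
  assumes "length xs = k" "distinct xs" "set xs \<subseteq> V"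
    "\<forall>i<k. \<forall>j<k. E (xs!i) (xs!j) \<longleftrightarrow> H i j"
  shows "contains_induced V E k H"
  unfolding contains_induced_def
proof (intro exI[of _ "\<lambda>n. xs!n"] conjI)
  show "inj_on (\<lambda>n. xs!n) {0..<k}" using assms(1,2) by (auto simp: inj_on_def nth_eq_iff_index_eq)
  show "(\<lambda>n. xs!n) ` {0..<k} \<subseteq> V" using assms(1,3) by auto
  show "\<forall>i<k. \<forall>j<k. E (xs!i) (xs!j) \<longleftrightarrow> H i j" by fact
qed
lemma tri:
  assumes irr: "\<forall>x. \<not> E x x" and sym: "\<forall>x y. E x y \<longrightarrow> E y x"
    and V: "a \<in> V" "b \<in> V" "d \<in> V" and e: "E a b" "E b d" "E a d"
  shows "contains_induced V E 3 K3"
proof (rule ci_list[of "[a,b,d]"])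
  have "a \<noteq> b" "b \<noteq> d" "a \<noteq> d" using irr e by metis+
  then show "distinct [a,b,d]" by simp
  show "\<forall>i<3. \<forall>j<3. E ([a,b,d]!i) ([a,b,d]!j) \<longleftrightarrow> K3 i j"
    unfolding all3 K3_def graph_of_edges_def using irr sym e by auto
qed (use V in auto)
lemma c6:
  assumes irr: "\<forall>x. \<not> E x x" and sym: "\<forall>x y. E x y \<longrightarrow> E y x"
    and V: "va \<in> V" "vb \<in> V" "vc \<in> V" "vd \<in> V" "ve \<in> V" "vf \<in> V"
    and e: "E va vb" "E va vf" "E vb vc" "E vc vd" "E vd ve" "E ve vf"
    and n: "\<not> E va vc" "\<not> E va vd" "\<not> E va ve" "\<not> E vb vd" "\<not> E vb ve" "\<not> E vb vf" "\<not> E vc ve" "\<not> E vc vf" "\<not> E vd vf"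
  shows "contains_induced V E 6 (cycle_graph 6)"
proof (rule ci_list[of "[va,vb,vc,vd,ve,vf]"])
  have er: "E vb va" "E vf va" "E vc vb" "E vd vc" "E ve vd" "E vf ve" using sym e by blast+
  have nr: "\<not> E vc va" "\<not> E vd va" "\<not> E ve va" "\<not> E vd vb" "\<not> E ve vb" "\<not> E vf vb" "\<not> E ve vc" "\<not> E vf vc" "\<not> E vf vd" using sym n by blast+
  have "va \<noteq> vb" using irr e n er nr by metis
  have "va \<noteq> vc" using e n er nr by (metis)
  have "va \<noteq> vd" using e n er nr by (metis)
  have "va \<noteq> ve" using e n er nr by (metis)
  have "va \<noteq> vf" using irr e n er nr by metis
  have "vb \<noteq> vc" using irr e n er nr by metis
  have "vb \<noteq> vd" using e n er nr by (metis)
  have "vb \<noteq> ve" using e n er nr by (metis)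
  have "vb \<noteq> vf" using e n er nr by (metis)
  have "vc \<noteq> vd" using irr e n er nr by metis
  have "vc \<noteq> ve" using e n er nr by (metis)
  have "vc \<noteq> vf" using e n er nr by (metis)
  have "vd \<noteq> ve" using irr e n er nr by metis
  have "vd \<noteq> vf" using e n er nr by (metis)
  have "ve \<noteq> vf" using irr e n er nr by metis
  show "distinct [va,vb,vc,vd,ve,vf]" using irr e n er nr by auto
  show "\<forall>i<6. \<forall>j<6. E ([va,vb,vc,vd,ve,vf]!i) ([va,vb,vc,vd,ve,vf]!j) \<longleftrightarrow> (cycle_graph 6) i j"
    unfolding all6 cycle_graph_def using irr e n er nr by simp
qed (use V in auto)

lemma x2:
  assumes irr: "\<forall>x. \<not> E x x" and sym: "\<forall>x y. E x y \<longrightarrow> E y x"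
    and V: "va \<in> V" "vb \<in> V" "vc \<in> V" "vd \<in> V" "ve \<in> V" "vf \<in> V" "vg \<in> V"
    and e: "E va vb" "E va vd" "E va ve" "E vb vc" "E vb vf" "E vc vd" "E vc vg"
    and n: "\<not> E va vc" "\<not> E va vf" "\<not> E va vg" "\<not> E vb vd" "\<not> E vb ve" "\<not> E vb vg" "\<not> E vc ve" "\<not> E vc vf" "\<not> E vd ve" "\<not> E vd vf" "\<not> E vd vg" "\<not> E ve vf" "\<not> E ve vg" "\<not> E vf vg"
  shows "contains_induced V E 7 X2"
proof (rule ci_list[of "[va,vb,vc,vd,ve,vf,vg]"])
  have er: "E vb va" "E vd va" "E ve va" "E vc vb" "E vf vb" "E vd vc" "E vg vc" using sym e by blast+
  have nr: "\<not> E vc va" "\<not> E vf va" "\<not> E vg va" "\<not> E vd vb" "\<not> E ve vb" "\<not> E vg vb" "\<not> E ve vc" "\<not> E vf vc" "\<not> E ve vd" "\<not> E vf vd" "\<not> E vg vd" "\<not> E vf ve" "\<not> E vg ve" "\<not> E vg vf" using sym n by blast+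
  have "va \<noteq> vb" using irr e n er nr by metis
  have "va \<noteq> vc" using e n er nr by (metis)
  have "va \<noteq> vd" using irr e n er nr by metis
  have "va \<noteq> ve" using irr e n er nr by metis
  have "va \<noteq> vf" using e n er nr by (metis)
  have "va \<noteq> vg" using e n er nr by (metis)
  have "vb \<noteq> vc" using irr e n er nr by metis
  have "vb \<noteq> vd" using e n er nr by (metis)
  have "vb \<noteq> ve" using e n er nr by (metis)
  have "vb \<noteq> vf" using irr e n er nr by metis
  have "vb \<noteq> vg" using e n er nr by (metis)
  have "vc \<noteq> vd" using irr e n er nr by metis
  have "vc \<noteq> ve" using e n er nr by (metis)
  have "vc \<noteq> vf" using e n er nr by (metis)
  have "vc \<noteq> vg" using irr e n er nr by metis
  have "vd \<noteq> ve" using e n er nr by (metis)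
  have "vd \<noteq> vf" using e n er nr by (metis)
  have "vd \<noteq> vg" using e n er nr by (metis)
  have "ve \<noteq> vf" using e n er nr by (metis)
  have "ve \<noteq> vg" using e n er nr by (metis)
  have "vf \<noteq> vg" using e n er nr by (metis)
  show "distinct [va,vb,vc,vd,ve,vf,vg]" using irr e n er nr by auto
  show "\<forall>i<7. \<forall>j<7. E ([va,vb,vc,vd,ve,vf,vg]!i) ([va,vb,vc,vd,ve,vf,vg]!j) \<longleftrightarrow> X2 i j"
    unfolding all7 X2_def graph_of_edges_def using irr e n er nr by simp
qed (use V in auto)

lemma x3:
  assumes irr: "\<forall>x. \<not> E x x" and sym: "\<forall>x y. E x y \<longrightarrow> E y x"
    and V: "va \<in> V" "vb \<in> V" "vc \<in> V" "vd \<in> V" "ve \<in> V" "vf \<in> V" "vg \<in> V"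
    and e: "E va vb" "E va vd" "E vb vc" "E vb vf" "E vb vg" "E vc vd" "E vc ve" "E ve vf"
    and n: "\<not> E va vc" "\<not> E va ve" "\<not> E va vf" "\<not> E va vg" "\<not> E vb vd" "\<not> E vb ve" "\<not> E vc vf" "\<not> E vc vg" "\<not> E vd ve" "\<not> E vd vf" "\<not> E vd vg" "\<not> E ve vg" "\<not> E vf vg"
  shows "contains_induced V E 7 X3"
proof (rule ci_list[of "[va,vb,vc,vd,ve,vf,vg]"])
  have er: "E vb va" "E vd va" "E vc vb" "E vf vb" "E vg vb" "E vd vc" "E ve vc" "E vf ve" using sym e by blast+
  have nr: "\<not> E vc va" "\<not> E ve va" "\<not> E vf va" "\<not> E vg va" "\<not> E vd vb" "\<not> E ve vb" "\<not> E vf vc" "\<not> E vg vc" "\<not> E ve vd" "\<not> E vf vd" "\<not> E vg vd" "\<not> E vg ve" "\<not> E vg vf" using sym n by blast+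
  have "va \<noteq> vb" using irr e n er nr by metis
  have "va \<noteq> vc" using e n er nr by (metis)
  have "va \<noteq> vd" using irr e n er nr by metis
  have "va \<noteq> ve" using e n er nr by (metis)
  have "va \<noteq> vf" using e n er nr by (metis)
  have "va \<noteq> vg" using e n er nr by (metis)
  have "vb \<noteq> vc" using irr e n er nr by metis
  have "vb \<noteq> vd" using e n er nr by (metis)
  have "vb \<noteq> ve" using e n er nr by (metis)
  have "vb \<noteq> vf" using irr e n er nr by metis
  have "vb \<noteq> vg" using irr e n er nr by metis
  have "vc \<noteq> vd" using irr e n er nr by metis
  have "vc \<noteq> ve" using irr e n er nr by metis
  have "vc \<noteq> vf" using e n er nr by (metis)
  have "vc \<noteq> vg" using e n er nr by (metis)
  have "vd \<noteq> ve" using e n er nr by (metis)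
  have "vd \<noteq> vf" using e n er nr by (metis)
  have "vd \<noteq> vg" using e n er nr by (metis)
  have "ve \<noteq> vf" using irr e n er nr by metis
  have "ve \<noteq> vg" using e n er nr by (metis)
  have "vf \<noteq> vg" using e n er nr by (metis)
  show "distinct [va,vb,vc,vd,ve,vf,vg]" using irr e n er nr by auto
  show "\<forall>i<7. \<forall>j<7. E ([va,vb,vc,vd,ve,vf,vg]!i) ([va,vb,vc,vd,ve,vf,vg]!j) \<longleftrightarrow> X3 i j"
    unfolding all7 X3_def graph_of_edges_def using irr e n er nr by simp
qed (use V in auto)

lemma comp_from:
  assumes "\<And>a a'. a \<in> A \<Longrightarrow> a' \<in> A \<Longrightarrow> E w a \<Longrightarrow> \<not> E w' a \<Longrightarrow> E w' a' \<Longrightarrow> \<not> E w a' \<Longrightarrow> False"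
  shows "nbhd E w \<inter> A \<subseteq> nbhd E w' \<inter> A \<or> nbhd E w' \<inter> A \<subseteq> nbhd E w \<inter> A"
  using assms unfolding nbhd_def by blast

lemma core:
  assumes irr: "\<forall>x. \<not> E x x" and sym: "\<forall>x y. E x y \<longrightarrow> E y x"
    and noK3: "\<not> contains_induced V E 3 K3"
    and noC6: "\<not> contains_induced V E 6 (cycle_graph 6)"
    and noX2: "\<not> contains_induced V E 7 X2"
    and noX3: "\<not> contains_induced V E 7 X3"
    and yV: "ya \<in> V" "yb \<in> V" "yc \<in> V" "yd \<in> V" "ye \<in> V"
    and ye: "E ya yb" "E yb yc" "E yc yd" "E yd ye"
    and yn: "\<not> E ya yc" "\<not> E ya yd" "\<not> E ya ye" "\<not> E yb yd" "\<not> E yb ye" "\<not> E yc ye"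
    and Ai: "\<And>v. v \<in> Ai \<Longrightarrow> v \<in> V \<and> \<not> E v ya \<and> \<not> E v yb \<and> E v yc \<and> \<not> E v yd \<and> E v ye"
    and Bp: "\<And>v. v \<in> Bp \<Longrightarrow> v \<in> V \<and> \<not> E v ya \<and> E v yb \<and> \<not> E v yc \<and> \<not> E v yd \<and> \<not> E v ye"
    and Aq: "\<And>v. v \<in> Aq \<Longrightarrow> v \<in> V \<and> \<not> E v ya \<and> E v yb \<and> \<not> E v yc \<and> E v yd \<and> \<not> E v ye"
    and Ap: "\<And>v. v \<in> Ap \<Longrightarrow> v \<in> V \<and> E v ya \<and> \<not> E v yb \<and> E v yc \<and> \<not> E v yd \<and> \<not> E v ye"
    and Bq: "\<And>v. v \<in> Bq \<Longrightarrow> v \<in> V \<and> \<not> E v ya \<and> \<not> E v yb \<and> E v yc \<and> \<not> E v yd \<and> \<not> E v ye"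
    and Bi: "\<And>v. v \<in> Bi \<Longrightarrow> v \<in> V \<and> \<not> E v ya \<and> \<not> E v yb \<and> \<not> E v yc \<and> E v yd \<and> \<not> E v ye"
  shows "(\<forall>w \<in> Bp \<union> Aq. \<forall>w' \<in> Bp \<union> Aq.
            nbhd E w \<inter> Ai \<subseteq> nbhd E w' \<inter> Ai \<or> nbhd E w' \<inter> Ai \<subseteq> nbhd E w \<inter> Ai)
       \<and> (\<forall>w \<in> Bp. \<forall>w' \<in> Aq. nbhd E w \<inter> Ai \<subseteq> nbhd E w' \<inter> Ai)
       \<and> (\<forall>u \<in> Ap \<union> Bq. \<forall>u' \<in> Ap \<union> Bq.
            nbhd E u \<inter> Bi \<subseteq> nbhd E u' \<inter> Bi \<or> nbhd E u' \<inter> Bi \<subseteq> nbhd E u \<inter> Bi)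
       \<and> (\<forall>u \<in> Ap. \<forall>u' \<in> Bq. nbhd E u \<inter> Bi \<subseteq> nbhd E u' \<inter> Bi)"
proof -
  have notri: "\<not> E a b" if "E a d" "E b d" "a \<in> V" "b \<in> V" "d \<in> V" for a b d
  proof
    assume "E a b"
    then have "contains_induced V E 3 K3"
      using tri[OF irr sym that(3,5,4)] that sym by blast
    with noK3 show False by simp
  qed
  have W: "w \<in> V \<and> E w yb \<and> \<not> E w ye \<and> \<not> E w yc" if "w \<in> Bp \<union> Aq" for w
    using that Bp Aq by blast
  have U: "u \<in> V \<and> E u yc \<and> \<not> E u yb \<and> \<not> E u yd" if "u \<in> Ap \<union> Bq" for u
    using that Ap Bq by blast
  have P1: "nbhd E w \<inter> Ai \<subseteq> nbhd E w' \<inter> Ai \<or> nbhd E w' \<inter> Ai \<subseteq> nbhd E w \<inter> Ai"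
    if "w \<in> Bp \<union> Aq" "w' \<in> Bp \<union> Aq" for w w'
  proof (rule comp_from)
    fix a a' assume h: "a \<in> Ai" "a' \<in> Ai" "E w a" "\<not> E w' a" "E w' a'" "\<not> E w a'"
    note w = W[OF that(1)] and w' = W[OF that(2)] and a = Ai[OF h(1)] and a' = Ai[OF h(2)]
    have n1: "\<not> E a a'" using notri[of a ye a'] a a' yV by blast
    have n2: "\<not> E w w'" using notri[of w yb w'] w w' yV by blast
    have "contains_induced V E 6 (cycle_graph 6)"
      apply (rule c6[where va=a and vb=w and vc=yb and vd=w' and ve=a' and vf=ye])
      using irr sym yV ye yn w w' a a' h n1 n2 by blast+
    with noC6 show False by simp
  qed
  have P2: "nbhd E w \<inter> Ai \<subseteq> nbhd E w' \<inter> Ai" if "w \<in> Bp" "w' \<in> Aq" for w w'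
  proof (rule ccontr)
    assume "\<not> ?thesis"
    then obtain a where h: "a \<in> Ai" "E w a" "\<not> E w' a" unfolding nbhd_def by blast
    note w = Bp[OF that(1)] and w' = Aq[OF that(2)] and a = Ai[OF h(1)]
    have n2: "\<not> E w w'" using notri[of w yb w'] w w' yV by blast
    have "contains_induced V E 6 (cycle_graph 6)"
      apply (rule c6[where va=a and vb=w and vc=yb and vd=w' and ve=yd and vf=ye])
      using irr sym yV ye yn w w' a h n2 by blast+
    with noC6 show False by simp
  qed
  have P3: "nbhd E u \<inter> Bi \<subseteq> nbhd E u' \<inter> Bi \<or> nbhd E u' \<inter> Bi \<subseteq> nbhd E u \<inter> Bi"
    if "u \<in> Ap \<union> Bq" "u' \<in> Ap \<union> Bq" for u u'
  proof (rule comp_from)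
    fix b b' assume h: "b \<in> Bi" "b' \<in> Bi" "E u b" "\<not> E u' b" "E u' b'" "\<not> E u b'"
    note u = U[OF that(1)] and u' = U[OF that(2)] and b = Bi[OF h(1)] and b' = Bi[OF h(2)]
    have n1: "\<not> E b b'" using notri[of b yd b'] b b' yV by blast
    have n2: "\<not> E u u'" using notri[of u yc u'] u u' yV by blast
    have "contains_induced V E 7 X3"
      apply (rule x3[where va=u and vb=yc and vc=yd and vd=b and ve=b' and vf=u' and vg=yb])
      using irr sym yV ye yn u u' b b' h n1 n2 by blast+
    with noX3 show False by simp
  qed
  have P4: "nbhd E u \<inter> Bi \<subseteq> nbhd E u' \<inter> Bi" if "u \<in> Ap" "u' \<in> Bq" for u u'
  proof (rule ccontr)
    assume "\<not> ?thesis"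
    then obtain b where h: "b \<in> Bi" "E u b" "\<not> E u' b" unfolding nbhd_def by blast
    note u = Ap[OF that(1)] and u' = Bq[OF that(2)] and b = Bi[OF h(1)]
    have n2: "\<not> E u u'" using notri[of u yc u'] u u' yV by blast
    have "contains_induced V E 7 X2"
      apply (rule x2[where va=u and vb=yc and vc=yd and vd=b and ve=ya and vf=u' and vg=ye])
      using irr sym yV ye yn u u' b h n2 by blast+
    with noX2 show False by simp
  qed
  show ?thesis using P1 P2 P3 P4 by blast
qed


lemma small_dvd: "int m dvd d \<Longrightarrow> \<bar>d\<bar> < int m \<Longrightarrow> d = 0"
proof (rule ccontr)
  assume "int m dvd d" "\<bar>d\<bar> < int m" "d \<noteq> 0"
  then have "\<bar>int m\<bar> \<le> \<bar>d\<bar>" using dvd_imp_le_int by blast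
  with \<open>\<bar>d\<bar> < int m\<close> show False by simp
qed

lemma cyc_idx: "0 < m \<Longrightarrow> nat (k mod int m) < m"
  by (simp add: nat_less_iff)

lemma int_cyc_idx: "0 < m \<Longrightarrow> int (nat (k mod int m)) = k mod int m"
  by simp

lemma cyc_in: "0 < m \<Longrightarrow> cyc c m k \<in> c ` {0..<m}"
  unfolding cyc_def using cyc_idx by auto

lemma cyc_eq:
  assumes inj: "inj_on c {0..<m}" and m: "10 \<le> m" and d: "\<bar>k - l\<bar> \<le> 5"
  shows "cyc c m k = cyc c m l \<longleftrightarrow> k = l"
proof
  assume "cyc c m k = cyc c m l"
  then have "nat (k mod int m) = nat (l mod int m)"
    using inj cyc_idx[of m] m unfolding cyc_def inj_on_def by auto
  then have "int (nat (k mod int m)) = int (nat (l mod int m))" by simp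
  then have "k mod int m = l mod int m" using m int_cyc_idx[of m] by simp
  then have "int m dvd k - l" by (simp add: mod_eq_dvd_iff)
  moreover have "\<bar>k - l\<bar> < int m" using d m by linarith
  ultimately show "k = l" using small_dvd[of m "k - l"] by simp
qed simp

lemma step_iff:
  assumes m: "10 \<le> m" and d: "\<bar>k - l\<bar> \<le> 5"
  and ia: "int a = k mod int m" and ib: "int b = l mod int m"
  shows "b = (a + 1) mod m \<longleftrightarrow> l = k + 1"
proof -
  have "b = (a + 1) mod m \<longleftrightarrow> int b = int ((a + 1) mod m)" by (rule of_nat_eq_iff[symmetric])
  also have "\<dots> \<longleftrightarrow> l mod int m = (k + 1) mod int m"
  proof -
    have e: "(k mod int m + 1) mod int m = (k + 1) mod int m" by (rule mod_add_left_eq)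
    have "int ((a + 1) mod m) = (int a + 1) mod int m" by (simp only: zmod_int of_nat_add of_nat_1)
    also have "\<dots> = (k + 1) mod int m" using ia e by simp
    finally show ?thesis using ib by simp
  qed
  also have "\<dots> \<longleftrightarrow> int m dvd l - (k + 1)" by (simp add: mod_eq_dvd_iff)
  also have "\<dots> \<longleftrightarrow> l = k + 1"
  proof
    assume "int m dvd l - (k + 1)"
    moreover have "\<bar>l - (k + 1)\<bar> < int m" using d m by linarith
    ultimately show "l = k + 1" using small_dvd[of m "l - (k+1)"] by simp
  qed simp
  finally show ?thesis .
qed

lemma t1: "(l = k + 1 \<or> k = l + 1) \<longleftrightarrow> \<bar>k - l\<bar> = (1::int)"
  by (simp add: abs_if) arith

lemma cyc_adj:
  assumes h: "is_hole V E c m" and m: "10 \<le> m" and d: "\<bar>k - l\<bar> \<le> 5"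
  shows "E (cyc c m k) (cyc c m l) \<longleftrightarrow> \<bar>k - l\<bar> = 1"
proof -
  define a where "a = nat (k mod int m)"
  define b where "b = nat (l mod int m)"
  have ab: "a < m" "b < m" using cyc_idx m unfolding a_def b_def by auto
  have ia: "int a = k mod int m" and ib: "int b = l mod int m" using m unfolding a_def b_def by simp_all
  have "E (cyc c m k) (cyc c m l) \<longleftrightarrow> cycle_graph m a b"
  proof -
    have "\<forall>i<m. \<forall>j<m. E (c i) (c j) \<longleftrightarrow> cycle_graph m i j" using h unfolding is_hole_def by blast
    then have "E (c a) (c b) \<longleftrightarrow> cycle_graph m a b" using ab by blast
    then show ?thesis unfolding cyc_def a_def b_def .
  qed
  also have "\<dots> \<longleftrightarrow> b = (a + 1) mod m \<or> a = (b + 1) mod m"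
    using ab unfolding cycle_graph_def by simp
  also have "\<dots> \<longleftrightarrow> l = k + 1 \<or> k = l + 1"
    using step_iff[OF m d ia ib] step_iff[OF m _ ib ia] d by (simp add: abs_minus_commute)
  also have "\<dots> \<longleftrightarrow> \<bar>k - l\<bar> = 1" by (rule t1)
  finally show ?thesis .
qed

lemma nb_mem:
  assumes "nbhd E v \<inter> c ` {0..<m} = S" "0 < m"
  shows "E v (cyc c m k) \<longleftrightarrow> cyc c m k \<in> S"
  using assms cyc_in[of m c k] unfolding nbhd_def by blast
lemma A_adj:
  assumes "v \<in> Aset V E c m j" "inj_on c {0..<m}" "10 \<le> m" "\<bar>k - j\<bar> \<le> 4"
  shows "E v (cyc c m k) \<longleftrightarrow> (k = j - 1 \<or> k = j + 1)"
proof -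
  have "E v (cyc c m k) \<longleftrightarrow> cyc c m k \<in> {cyc c m (j - 1), cyc c m (j + 1)}"
    using assms(1,3) by (intro nb_mem) (auto simp: Aset_def)
  also have "\<dots> \<longleftrightarrow> (k = j - 1 \<or> k = j + 1)"
    using cyc_eq[OF assms(2,3), of k "j - 1"] cyc_eq[OF assms(2,3), of k "j + 1"] assms(4)
    by auto
  finally show ?thesis .
qed

lemma B_adj:
  assumes "v \<in> Bset V E c m j" "inj_on c {0..<m}" "10 \<le> m" "\<bar>k - j\<bar> \<le> 4"
  shows "E v (cyc c m k) \<longleftrightarrow> k = j"
proof -
  have "E v (cyc c m k) \<longleftrightarrow> cyc c m k \<in> {cyc c m j}"
    using assms(1,3) by (intro nb_mem) (auto simp: Bset_def)
  also have "\<dots> \<longleftrightarrow> k = j"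
    using cyc_eq[OF assms(2,3), of k j] assms(4) by auto
  finally show ?thesis .
qed

lemma AV: "v \<in> Aset V E c m j \<Longrightarrow> v \<in> V" by (simp add: Aset_def)
lemma BV: "v \<in> Bset V E c m j \<Longrightarrow> v \<in> V" by (simp add: Bset_def)

theorem proposition3p6:
  fixes V :: "'a set" and E :: "'a \<Rightarrow> 'a \<Rightarrow> bool" and c :: "nat \<Rightarrow> 'a"
    and m :: nat and i p q :: int
  assumes "simple_graph V E" and "connected_graph V E"
    and "almost_bipartite_permutation V E"
    and "is_hole V E c m"
    and "\<forall>c' m'. is_hole V E c' m' \<longrightarrow> m \<le> m'"
    and "0 \<le> i" and "i < int m"
    and "(p, q) \<in> {(i - 2, i - 1), (i + 2, i + 1)}"
  shows "(\<forall>w \<in> Bset V E c m p \<union> Aset V E c m q. \<forall>w' \<in> Bset V E c m p \<union> Aset V E c m q.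
            nbhd E w \<inter> Aset V E c m i \<subseteq> nbhd E w' \<inter> Aset V E c m i \<or>
            nbhd E w' \<inter> Aset V E c m i \<subseteq> nbhd E w \<inter> Aset V E c m i)
       \<and> (\<forall>w \<in> Bset V E c m p. \<forall>w' \<in> Aset V E c m q.
            nbhd E w \<inter> Aset V E c m i \<subseteq> nbhd E w' \<inter> Aset V E c m i)
       \<and> (\<forall>u \<in> Aset V E c m p \<union> Bset V E c m q. \<forall>u' \<in> Aset V E c m p \<union> Bset V E c m q.
            nbhd E u \<inter> Bset V E c m i \<subseteq> nbhd E u' \<inter> Bset V E c m i \<or>
            nbhd E u' \<inter> Bset V E c m i \<subseteq> nbhd E u \<inter> Bset V E c m i)
       \<and> (\<forall>u \<in> Aset V E c m p. \<forall>u' \<in> Bset V E c m q.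
            nbhd E u \<inter> Bset V E c m i \<subseteq> nbhd E u' \<inter> Bset V E c m i)"
proof -
  have irr: "\<forall>x. \<not> E x x" and sym: "\<forall>x y. E x y \<longrightarrow> E y x"
    using assms(1) unfolding simple_graph_def by blast+
  have noK3: "\<not> contains_induced V E 3 K3" and noX2: "\<not> contains_induced V E 7 X2"
    and noX3: "\<not> contains_induced V E 7 X3"
    and noC: "\<forall>k\<in>{5..9}. \<not> contains_induced V E k (cycle_graph k)"
    using assms(3) unfolding almost_bipartite_permutation_def by blast+
  have noC6: "\<not> contains_induced V E 6 (cycle_graph 6)" using noC by simp
  have h: "is_hole V E c m" by fact
  have m5: "5 \<le> m" and inj: "inj_on c {0..<m}" and CV: "c ` {0..<m} \<subseteq> V"
    using h unfolding is_hole_def by blast+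
  have "contains_induced V E m (cycle_graph m)"
    using h unfolding is_hole_def contains_induced_def by blast
  then have "m \<notin> {5..9}" using noC by blast
  then have m: "10 \<le> m" using m5 by simp
  have m0: "0 < m" using m by simp
  have cV: "cyc c m k \<in> V" for k using cyc_in[OF m0, of c k] CV by blast
  note adj = cyc_adj[OF h m]
  note Aa = A_adj[OF _ inj m] and Ba = B_adj[OF _ inj m]
  have c1: ?thesis if pq: "p = i - 2" "q = i - 1"
    unfolding pq
    apply (rule core[where ya = "cyc c m (i - 3)" and yb = "cyc c m (i - 2)" and yc = "cyc c m (i - 1)"
          and yd = "cyc c m i" and ye = "cyc c m (i + 1)", OF irr sym noK3 noC6 noX2 noX3 cV cV cV cV cV])
    subgoal by (simp add: adj)
    subgoal by (simp add: adj)
    subgoal by (simp add: adj)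
    subgoal by (simp add: adj)
    subgoal by (simp add: adj)
    subgoal by (simp add: adj)
    subgoal by (simp add: adj)
    subgoal by (simp add: adj)
    subgoal by (simp add: adj)
    subgoal by (simp add: adj)
    subgoal by (simp add: Aa AV)
    subgoal by (simp add: Ba BV)
    subgoal by (simp add: Aa AV)
    subgoal by (simp add: Aa AV)
    subgoal by (simp add: Ba BV)
    subgoal by (simp add: Ba BV)
    done
  have c2: ?thesis if pq: "p = i + 2" "q = i + 1"
    unfolding pq
    apply (rule core[where ya = "cyc c m (i + 3)" and yb = "cyc c m (i + 2)" and yc = "cyc c m (i + 1)"
          and yd = "cyc c m i" and ye = "cyc c m (i - 1)", OF irr sym noK3 noC6 noX2 noX3 cV cV cV cV cV])
    subgoal by (simp add: adj)
    subgoal by (simp add: adj)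
    subgoal by (simp add: adj)
    subgoal by (simp add: adj)
    subgoal by (simp add: adj)
    subgoal by (simp add: adj)
    subgoal by (simp add: adj)
    subgoal by (simp add: adj)
    subgoal by (simp add: adj)
    subgoal by (simp add: adj)
    subgoal by (simp add: Aa AV)
    subgoal by (simp add: Ba BV)
    subgoal by (simp add: Aa AV)
    subgoal by (simp add: Aa AV)
    subgoal by (simp add: Ba BV)
    subgoal by (simp add: Ba BV)
    done
  show ?thesis using assms(8) c1 c2 by blast
qed
end
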